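(* Let $G$ be a finite, simple, connected bipartite graph and let $I_G$ be its toric ideal over a field $K$. Then $\mathrm{Split}(I_G)=\mathrm{Split}_{\mathrm{rad}}(I_G)$.
   Context: Let $G$ have vertices $v_1,\ldots,v_n$ and edges $e_1,\ldots,e_m$. To an edge $e=\{v_i,v_j\}$ associate ${\bf a}_e\in\{0,1\}^n$ with entries $1$ in positions $i,j$ and $0$ elsewhere. $I_G\subset K[e_1,\ldots,e_m]$ is the toric ideal of $A_G=\{{\bf a}_e\mid e\in E(G)\}$, i.e. the kernel of $K[e_1,\ldots,e_m]\to K[t_1,\ldots,t_n]$, $e_i\mapsto{\bf t}^{{\bf a}_{e_i}}$. For a toric ideal $I_A$ (of a configuration $A$ of $N$ integer vectors with $\ker_{\mathbb{Z}}(A)\cap\mathbb{N}^N=\{{\bf 0}\}$) in $K[x_1,\ldots,x_N]$: $\mathrm{Split}(I_A)$ is the smallest integer $s$ such that there exist toric ideals $I_{A_1},\ldots,I_{A_s}$ in the same polynomial ring with $I_A=I_{A_1}+\cdots+I_{A_s}$ and $I_{A_i}\ne I_A$ for all $i$; $\mathrm{Split}_{\mathrm{rad}}(I_A)$ is the smallest integer $r$ such that there exist toric ideals $I_{A_1},\ldots,I_{A_r}$ with $I_A=\mathrm{rad}(I_{A_1}+\cdots+I_{A_r})$ and $I_{A_i}\ne I_A$ for all $i$. *)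

theory Defs
  imports Main "HOL-Library.Poly_Mapping"
begin

(* Polynomial ring K[x_e | e :: 'e] with finitely many variables indexed by the
  finite type 'e: monomials are exponent vectors 'e \<Rightarrow>\<^sub>0 nat, polynomials are finitely
  supported coefficient maps from monomials to K. *)
type_synonym ('e, 'k) mpoly = "('e \<Rightarrow>\<^sub>0 nat) \<Rightarrow>\<^sub>0 'k"

definition A_deg :: "('e::finite \<Rightarrow> 'd \<Rightarrow> int) \<Rightarrow> ('e \<Rightarrow>\<^sub>0 nat) \<Rightarrow> 'd \<Rightarrow> int" where
  "A_deg A u = (\<lambda>i. \<Sum>e\<in>UNIV. int (Poly_Mapping.lookup u e) * A e i)"

(* Toric ideal I_A: kernel of the K-algebra map x^u \<mapsto> t^(A u) into the Laurent
  polynomial ring. Since distinct Laurent monomials t^w are linearly independent,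
  f lies in the kernel iff for every w the coefficients of f on the fibre {u. A u = w}
  sum to zero. *)
definition toric_ideal :: "('e::finite \<Rightarrow> 'd \<Rightarrow> int) \<Rightarrow> ('e, 'k::field) mpoly set" where
  "toric_ideal A = {f. \<forall>w. (\<Sum>u\<in>{u \<in> Poly_Mapping.keys f. A_deg A u = w}. Poly_Mapping.lookup f u) = 0}"

(* Admissible configurations: finitely many integer vectors (one for each variable)
  in some Z^d, with ker_Z(A) \<inter> N^N = {0}. *)
definition configuration :: "('e::finite \<Rightarrow> nat \<Rightarrow> int) \<Rightarrow> bool" where
  "configuration A \<longleftrightarrow> (\<exists>d. \<forall>e i. d \<le> i \<longrightarrow> A e i = 0) \<and>
     (\<forall>u. A_deg A u = (\<lambda>_. 0) \<longrightarrow> u = 0)"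

definition ideal_gen :: "'a::comm_ring_1 set \<Rightarrow> 'a set" where
  "ideal_gen S = {f. \<exists>F r. finite F \<and> F \<subseteq> S \<and> f = (\<Sum>g\<in>F. r g * g)}"

definition rad :: "'a::comm_ring_1 set \<Rightarrow> 'a set" where
  "rad J = {f. \<exists>n. f ^ n \<in> J}"

definition toric_sum :: "nat \<Rightarrow> (nat \<Rightarrow> ('e::finite \<Rightarrow> nat \<Rightarrow> int)) \<Rightarrow> ('e, 'k::field) mpoly set" where
  "toric_sum s As = ideal_gen (\<Union>i<s. toric_ideal (As i))"

definition is_splitting :: "('e::finite, 'k::field) mpoly set \<Rightarrow> nat \<Rightarrow> bool" where
  "is_splitting I s \<longleftrightarrow> 1 \<le> s \<and> (\<exists>As. (\<forall>i<s. configuration (As i) \<and> toric_ideal (As i) \<noteq> I)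
       \<and> I = toric_sum s As)"

definition is_rad_splitting :: "('e::finite, 'k::field) mpoly set \<Rightarrow> nat \<Rightarrow> bool" where
  "is_rad_splitting I s \<longleftrightarrow> 1 \<le> s \<and> (\<exists>As. (\<forall>i<s. configuration (As i) \<and> toric_ideal (As i) \<noteq> I)
       \<and> I = rad (toric_sum s As))"

(* Split(I) and Split_rad(I): least sizes (only meaningful when some splitting exists). *)
definition Split :: "('e::finite, 'k::field) mpoly set \<Rightarrow> nat" where
  "Split I = (LEAST s. is_splitting I s)"

definition Split_rad :: "('e::finite, 'k::field) mpoly set \<Rightarrow> nat" where
  "Split_rad I = (LEAST s. is_rad_splitting I s)"

(* Finite simple graphs: vertex set = the finite type 'v, edge set = the finite type 'e,
  each edge e has endpoint set ends e of size 2, and distinct edges have distinct endpoints. *)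
definition simple_graph :: "('e::finite \<Rightarrow> 'v::finite set) \<Rightarrow> bool" where
  "simple_graph ends \<longleftrightarrow> (\<forall>e. card (ends e) = 2) \<and> inj ends"

definition graph_adj :: "('e \<Rightarrow> 'v set) \<Rightarrow> ('v \<times> 'v) set" where
  "graph_adj ends = {(x, y). \<exists>e. ends e = {x, y}}"

definition graph_connected :: "('e \<Rightarrow> 'v set) \<Rightarrow> bool" where
  "graph_connected ends \<longleftrightarrow> (\<forall>x y. (x, y) \<in> (graph_adj ends)\<^sup>*)"

definition graph_bipartite :: "('e \<Rightarrow> 'v set) \<Rightarrow> bool" where
  "graph_bipartite ends \<longleftrightarrow> (\<exists>X. \<forall>e. \<exists>x y. ends e = {x, y} \<and> x \<in> X \<and> y \<notin> X)"

definition graph_config :: "('e \<Rightarrow> 'v set) \<Rightarrow> 'e \<Rightarrow> 'v \<Rightarrow> int" where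
  "graph_config ends = (\<lambda>e v. if v \<in> ends e then 1 else 0)"

end

theory Submission
  imports Defs "HOL-Library.Countable"
begin

abbreviation lk where "lk \<equiv> Poly_Mapping.lookup"
abbreviation ks where "ks \<equiv> Poly_Mapping.keys"

definition closed_ideal :: "'a::comm_ring_1 set \<Rightarrow> bool" where
  "closed_ideal J \<longleftrightarrow> 0 \<in> J \<and> (\<forall>f\<in>J. \<forall>g\<in>J. f + g \<in> J) \<and> (\<forall>r. \<forall>f\<in>J. r * f \<in> J)"

lemma ci_zero: "closed_ideal J \<Longrightarrow> 0 \<in> J"
  by (simp add: closed_ideal_def)

lemma ci_add: "closed_ideal J \<Longrightarrow> f \<in> J \<Longrightarrow> g \<in> J \<Longrightarrow> f + g \<in> J"
  by (simp add: closed_ideal_def)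

lemma ci_mult: "closed_ideal J \<Longrightarrow> f \<in> J \<Longrightarrow> r * f \<in> J"
  by (simp add: closed_ideal_def)

lemma ci_diff: "closed_ideal J \<Longrightarrow> f \<in> J \<Longrightarrow> g \<in> J \<Longrightarrow> f - g \<in> J"
proof -
  assume J: "closed_ideal J" "f \<in> J" "g \<in> J"
  have "(-1) * g \<in> J" using J ci_mult by blast
  then have "f + (-1) * g \<in> J" using J ci_add by blast
  then show ?thesis by simp
qed

lemma ci_sum: assumes "closed_ideal J" "finite F" "\<And>x. x \<in> F \<Longrightarrow> h x \<in> J" shows "sum h F \<in> J"
  using assms(2,3) by (induction F rule: finite_induct) (auto intro: ci_zero ci_add assms(1))

lemma ideal_gen_closed: "closed_ideal (ideal_gen S)"
  unfolding closed_ideal_def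
proof (intro conjI ballI allI)
  show "0 \<in> ideal_gen S" unfolding ideal_gen_def
    by (rule CollectI, rule exI[of _ "{}"]) simp
next
  fix f g assume "f \<in> ideal_gen S" "g \<in> ideal_gen S"
  then obtain F1 r1 F2 r2 where F: "finite F1" "F1 \<subseteq> S" "f = (\<Sum>g\<in>F1. r1 g * g)"
    "finite F2" "F2 \<subseteq> S" "g = (\<Sum>g\<in>F2. r2 g * g)"
    unfolding ideal_gen_def by blast
  define r where "r = (\<lambda>x. (if x \<in> F1 then r1 x else 0) + (if x \<in> F2 then r2 x else 0))"
  have "(\<Sum>x\<in>F1 \<union> F2. r x * x) = (\<Sum>x\<in>F1 \<union> F2. (if x \<in> F1 then r1 x * x else 0))
      + (\<Sum>x\<in>F1 \<union> F2. (if x \<in> F2 then r2 x * x else 0))"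
  proof -
    have "\<And>x. r x * x = (if x \<in> F1 then r1 x * x else 0) + (if x \<in> F2 then r2 x * x else 0)"
      by (simp add: r_def distrib_right)
    then show ?thesis by (simp add: sum.distrib)
  qed
  also have "\<dots> = f + g"
  proof -
    have "(F1 \<union> F2) \<inter> F1 = F1" "(F1 \<union> F2) \<inter> F2 = F2" by auto
    then show ?thesis
      using sum.inter_restrict[of "F1 \<union> F2" "\<lambda>x. r1 x * x" F1]
        sum.inter_restrict[of "F1 \<union> F2" "\<lambda>x. r2 x * x" F2] F by simp
  qed
  finally show "f + g \<in> ideal_gen S" unfolding ideal_gen_def using F
    by (intro CollectI exI[of _ "F1 \<union> F2"] exI[of _ r]) auto
next
  fix r f assume "f \<in> ideal_gen S"
  then obtain F r1 where F: "finite F" "F \<subseteq> S" "f = (\<Sum>g\<in>F. r1 g * g)"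
    unfolding ideal_gen_def by blast
  have "r * f = (\<Sum>g\<in>F. (r * r1 g) * g)" using F by (simp add: sum_distrib_left mult.assoc)
  then show "r * f \<in> ideal_gen S" unfolding ideal_gen_def using F
    by (intro CollectI exI[of _ F] exI[of _ "\<lambda>g. r * r1 g"]) auto
qed

lemma ideal_gen_base: "g \<in> S \<Longrightarrow> g \<in> ideal_gen S"
  unfolding ideal_gen_def
  by (intro CollectI exI[of _ "{g}"] exI[of _ "\<lambda>_. 1"]) simp

lemma ideal_gen_least: "closed_ideal T \<Longrightarrow> S \<subseteq> T \<Longrightarrow> ideal_gen S \<subseteq> T"
proof
  fix f assume T: "closed_ideal T" "S \<subseteq> T" and "f \<in> ideal_gen S"
  then obtain F r where F: "finite F" "F \<subseteq> S" "f = (\<Sum>g\<in>F. r g * g)"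
    unfolding ideal_gen_def by blast
  show "f \<in> T" unfolding F(3) using F T by (intro ci_sum) (auto intro: ci_mult)
qed

lemma toric_sup:
  assumes "finite S" "ks f \<subseteq> S"
  shows "(\<Sum>u\<in>{u \<in> ks f. P u}. lk f u) = (\<Sum>u\<in>{u \<in> S. P u}. lk f u)"
  using assms by (intro sum.mono_neutral_left) (auto simp: in_keys_iff)

lemma toric_iff_sup:
  assumes "finite S" "ks f \<subseteq> S"
  shows "f \<in> toric_ideal A \<longleftrightarrow> (\<forall>w. (\<Sum>u\<in>{u \<in> S. A_deg A u = w}. lk f u) = 0)"
  unfolding toric_ideal_def using toric_sup[OF assms] by simp

definition mon :: "('e \<Rightarrow>\<^sub>0 nat) \<Rightarrow> ('e, 'k::field) mpoly" where
  "mon u = Poly_Mapping.single u 1"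

definition bin :: "('e \<Rightarrow>\<^sub>0 nat) \<Rightarrow> ('e \<Rightarrow>\<^sub>0 nat) \<Rightarrow> ('e, 'k::field) mpoly" where
  "bin a b = mon a - mon b"

lemma mon_mult: "mon x * mon y = mon (x + y)"
  unfolding mon_def by (simp add: mult_single)

lemma lookup_bin: "lk (bin a b :: ('e,'k::field) mpoly) u = (if u = a then 1 else 0) - (if u = b then 1 else 0)"
  unfolding bin_def mon_def by (simp add: lookup_minus lookup_single when_def)

lemma keys_bin: "ks (bin a b :: ('e,'k::field) mpoly) \<subseteq> {a, b}"
  by (auto simp: in_keys_iff lookup_bin split: if_splits)

lemma bin_toric: "(bin a b :: ('e::finite,'k::field) mpoly) \<in> toric_ideal A \<longleftrightarrow> A_deg A a = A_deg A b"
proof -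
  have eq: "(bin a b :: ('e,'k) mpoly) \<in> toric_ideal A \<longleftrightarrow>
     (\<forall>w. (\<Sum>u\<in>{u \<in> {a,b}. A_deg A u = w}. lk (bin a b :: ('e,'k) mpoly) u) = 0)"
    by (rule toric_iff_sup) (simp_all add: keys_bin)
  show ?thesis
  proof (cases "a = b")
    case True
    then show ?thesis using eq by (simp add: lookup_bin)
  next
    case False
    have s: "(\<Sum>u\<in>{u \<in> {a,b}. A_deg A u = w}. lk (bin a b :: ('e,'k) mpoly) u)
       = (if A_deg A a = w then 1 else 0) - (if A_deg A b = w then 1 else 0)" for w
    proof -
      have "{u \<in> {a,b}. A_deg A u = w} = (if A_deg A a = w then {a} else {}) \<union> (if A_deg A b = w then {b} else {})"
        by auto
      then show ?thesis using False by (auto simp: lookup_bin)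
    qed
    show ?thesis unfolding eq s
    proof
      assume h: "\<forall>w. (if A_deg A a = w then 1 else 0) - (if A_deg A b = w then 1 else (0::'k)) = 0"
      show "A_deg A a = A_deg A b"
      proof (rule ccontr)
        assume "A_deg A a \<noteq> A_deg A b"
        then show False using h[rule_format, of "A_deg A a"] by simp
      qed
    qed simp
  qed
qed

lemma toric_gen:
  assumes J: "closed_ideal J"
    and B: "\<And>a b. A_deg A a = A_deg A b \<Longrightarrow> (bin a b :: ('e::finite,'k::field) mpoly) \<in> J"
  shows "toric_ideal A \<subseteq> J"
proof -
  have "\<forall>f. card (ks f) = n \<longrightarrow> f \<in> toric_ideal A \<longrightarrow> f \<in> J" for n
  proof (induction n rule: less_induct)
    case (less n)
    show ?case
    proof (intro allI impI)
      fix f :: "('e,'k) mpoly"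
      assume n: "card (ks f) = n" and fT: "f \<in> toric_ideal A"
      show "f \<in> J"
      proof (cases "f = 0")
        case True then show ?thesis using J ci_zero by blast
      next
        case False
        then obtain u where u: "u \<in> ks f" by (metis keys_eq_empty ex_in_conv)
        define F where "F = {u' \<in> ks f. A_deg A u' = A_deg A u}"
        have F0: "(\<Sum>x\<in>F. lk f x) = 0" using fT unfolding toric_ideal_def F_def by blast
        have "\<exists>u'\<in>F. u' \<noteq> u"
        proof (rule ccontr)
          assume "\<not> ?thesis"
          then have "F = {u}" using u unfolding F_def by auto
          then show False using F0 u by (simp add: in_keys_iff)
        qed
        then obtain u' where u': "u' \<in> ks f" "A_deg A u' = A_deg A u" "u' \<noteq> u"
          unfolding F_def by auto
        define c where "c = lk f u"
        define g where "g = f - Poly_Mapping.single 0 c * bin u u'"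
        have sb: "Poly_Mapping.single 0 c * bin u u' = Poly_Mapping.single u c - Poly_Mapping.single u' c"
          unfolding bin_def mon_def by (simp add: right_diff_distrib mult_single)
        have lg: "lk g x = lk f x - (if x = u then c else 0) + (if x = u' then c else 0)" for x
          unfolding g_def sb by (simp add: lookup_minus lookup_single when_def)
        have kg: "ks g \<subseteq> ks f - {u}"
          using u' by (auto simp: in_keys_iff lg c_def split: if_splits)
        have "card (ks g) < card (ks f)"
        proof -
          have "ks g \<subset> ks f" using kg u by blast
          then show ?thesis by (simp add: psubset_card_mono)
        qed
        moreover have "g \<in> toric_ideal A"
        proof -
          have "(\<Sum>x\<in>{x \<in> ks f. A_deg A x = w}. lk g x) = 0" for w
          proof -
            let ?T = "{x \<in> ks f. A_deg A x = w}"
            have "(\<Sum>x\<in>?T. lk g x) = (\<Sum>x\<in>?T. lk f x) - (\<Sum>x\<in>?T. (if x = u then c else 0))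
                + (\<Sum>x\<in>?T. (if x = u' then c else 0))"
              by (simp add: lg sum.distrib sum_subtractf)
            also have "\<dots> = (\<Sum>x\<in>?T. lk f x)"
              using u u' by (simp add: sum.delta)
            also have "\<dots> = 0" using fT unfolding toric_ideal_def by blast
            finally show ?thesis .
          qed
          then show ?thesis using toric_iff_sup[of "ks f" g A] kg by auto
        qed
        ultimately have "g \<in> J" using less n by blast
        moreover have "Poly_Mapping.single 0 c * bin u u' \<in> J"
          using B u' J ci_mult by metis
        ultimately have "g + Poly_Mapping.single 0 c * bin u u' \<in> J" using J ci_add by blast
        then show ?thesis unfolding g_def by simp
      qed
    qed
  qed
  then show ?thesis by blast
qed


definition dg :: "('e::finite \<Rightarrow> 'v set) \<Rightarrow> ('e \<Rightarrow>\<^sub>0 nat) \<Rightarrow> 'v \<Rightarrow> nat" where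
  "dg ends a v = (\<Sum>e\<in>UNIV. if v \<in> ends e then lk a e else 0)"

definition sz :: "('e::finite \<Rightarrow>\<^sub>0 nat) \<Rightarrow> nat" where
  "sz a = (\<Sum>e\<in>UNIV. lk a e)"

definition ind :: "'e set \<Rightarrow> ('e \<Rightarrow>\<^sub>0 nat)" where
  "ind P = (\<Sum>e\<in>P. Poly_Mapping.single e 1)"

definition le_pm :: "('e \<Rightarrow>\<^sub>0 nat) \<Rightarrow> ('e \<Rightarrow>\<^sub>0 nat) \<Rightarrow> bool" where
  "le_pm p a \<longleftrightarrow> (\<forall>e. lk p e \<le> lk a e)"

lemma lk_single: "lk (Poly_Mapping.single k c) x = (if x = k then c else 0)"
  by (simp add: lookup_single when_def)

lemma lk_ind: "finite P \<Longrightarrow> lk (ind P) e = (if e \<in> P then 1 else 0)"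
  unfolding ind_def by (simp add: lookup_sum lk_single)

lemma ks_ind: "finite P \<Longrightarrow> ks (ind P) = P"
  by (auto simp: in_keys_iff lk_ind split: if_splits)

lemma ind_insert: "finite P \<Longrightarrow> e \<notin> P \<Longrightarrow> ind (insert e P) = Poly_Mapping.single e 1 + ind P"
  unfolding ind_def by simp

lemma le_pm_refl: "le_pm a a" by (simp add: le_pm_def)

lemma le_pm_trans: "le_pm a b \<Longrightarrow> le_pm b c \<Longrightarrow> le_pm a c"
  unfolding le_pm_def using order_trans by blast

lemma le_pm_keys: "le_pm p a \<Longrightarrow> ks p \<subseteq> ks a"
proof
  fix x assume "le_pm p a" "x \<in> ks p"
  then have "lk p x \<le> lk a x" "lk p x \<noteq> 0" by (auto simp: le_pm_def in_keys_iff)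
  then show "x \<in> ks a" by (simp add: in_keys_iff)
qed

lemma lk_diff: "lk (a - b) e = lk a e - lk b e"
  by (simp add: lookup_minus)

lemma diff_add: "le_pm b a \<Longrightarrow> a - b + b = (a :: 'e \<Rightarrow>\<^sub>0 nat)"
  by (rule poly_mapping_eqI) (simp add: lookup_add lk_diff le_pm_def)

lemma add_diff: "a + b - b = (a :: 'e \<Rightarrow>\<^sub>0 nat)"
  by (rule poly_mapping_eqI) (simp add: lookup_add lk_diff)

lemma le_pm_add: "le_pm b (a + b)"
  by (simp add: le_pm_def lookup_add)

lemma dg_add: "dg ends (a + b) v = dg ends a v + dg ends b v"
  unfolding dg_def sum.distrib[symmetric] by (intro sum.cong) (auto simp: lookup_add)

lemma dg_zero [simp]: "dg ends 0 v = 0"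
  unfolding dg_def by simp

lemma dg_single: "dg ends (Poly_Mapping.single e n) v = (if v \<in> ends e then n else 0)"
proof -
  have "dg ends (Poly_Mapping.single e n) v = (\<Sum>x\<in>UNIV. if x = e then (if v \<in> ends e then n else 0) else 0)"
    unfolding dg_def by (intro sum.cong) (auto simp: lk_single)
  then show ?thesis by simp
qed

lemma dg_ge: "v \<in> ends e \<Longrightarrow> lk a e \<le> dg ends a v"
  unfolding dg_def
  using member_le_sum[of e UNIV "\<lambda>e. if v \<in> ends e then lk a e else 0"] by simp

lemma dg_mono: "le_pm p a \<Longrightarrow> dg ends p v \<le> dg ends a v"
  unfolding dg_def le_pm_def by (intro sum_mono) auto

lemma dg_diff: "le_pm b a \<Longrightarrow> dg ends (a - b) v = dg ends a v - dg ends b v"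
  using dg_add[of ends "a - b" b v] diff_add[of b a] by simp

lemma dg_eq0: "dg ends a v = 0 \<longleftrightarrow> (\<forall>e\<in>ks a. v \<notin> ends e)"
  unfolding dg_def by (auto simp: in_keys_iff)

lemma dg_ind: "dg ends (ind P) v = card {e \<in> P. v \<in> ends e}"
proof -
  have "dg ends (ind P) v = (\<Sum>e\<in>UNIV. if e \<in> {e \<in> P. v \<in> ends e} then 1 else 0)"
    unfolding dg_def by (intro sum.cong) (auto simp: lk_ind)
  also have "\<dots> = (\<Sum>e\<in>UNIV \<inter> {e \<in> P. v \<in> ends e}. 1)"
    by (rule sum.inter_restrict[symmetric]) simp
  also have "\<dots> = card {e \<in> P. v \<in> ends e}" by simp
  finally show ?thesis .
qed

lemma sz_add: "sz (a + b) = sz a + sz b"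
  unfolding sz_def by (simp add: lookup_add sum.distrib)

lemma sz_single: "sz (Poly_Mapping.single e n) = n"
  unfolding sz_def lk_single by (simp add: sum.delta)

lemma sz_ind: "sz (ind P) = card P"
  unfolding sz_def by (simp add: lk_ind sum.inter_restrict[symmetric])

lemma sz_diff: "le_pm b a \<Longrightarrow> sz (a - b) = sz a - sz b"
  using sz_add[of "a - b" b] diff_add[of b a] by simp

lemma le_pm_sz_less: "le_pm p a \<Longrightarrow> p \<noteq> a \<Longrightarrow> sz p < sz a"
proof -
  assume le: "le_pm p a" and ne: "p \<noteq> a"
  then obtain e where "lk p e \<noteq> lk a e" by (meson poly_mapping_eqI)
  then have "lk p e < lk a e" using le unfolding le_pm_def by (meson order_le_neq_trans)
  then show ?thesis unfolding sz_def using le unfolding le_pm_def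
    by (intro sum_strict_mono_ex1) auto
qed

lemma le_pm_sz_eq: "le_pm p a \<Longrightarrow> sz a \<le> sz p \<Longrightarrow> p = a"
  using le_pm_sz_less by fastforce

lemma A_G: "A_deg (graph_config ends) u = (\<lambda>v. int (dg ends u v))"
  unfolding A_deg_def dg_def graph_config_def
  by (rule ext) (simp add: if_distrib of_nat_sum cong: if_cong)

lemma A_G_eq: "A_deg (graph_config ends) a = A_deg (graph_config ends) b \<longleftrightarrow> dg ends a = dg ends b"
  unfolding A_G by (auto simp: fun_eq_iff)

lemma A_deg_add: "A_deg A (x + y) i = A_deg A x i + A_deg A y i"
  unfolding A_deg_def by (simp add: lookup_add algebra_simps sum.distrib)

locale bip =
  fixes ends :: "'e::finite \<Rightarrow> 'v::finite set" and X :: "'v set"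
  assumes card2: "\<And>e. card (ends e) = 2" and inj_ends: "inj ends"
    and bipX: "\<And>e. \<exists>x y. ends e = {x, y} \<and> x \<in> X \<and> y \<notin> X"
begin

lemma ends_ne: "\<exists>v. v \<in> ends e"
  using bipX[of e] by auto

lemma dg0_imp: "(\<And>v. dg ends a v = 0) \<Longrightarrow> a = 0"
proof (rule ccontr)
  assume h: "\<And>v. dg ends a v = 0" and "a \<noteq> 0"
  then obtain e where e: "e \<in> ks a" by (metis keys_eq_empty ex_in_conv)
  obtain v where "v \<in> ends e" using ends_ne by blast
  then show False using h[of v] e by (auto simp: dg_eq0)
qed

lemma sum_dg: "(\<Sum>v\<in>UNIV. dg ends a v) = 2 * sz a"
proof -
  have "(\<Sum>v\<in>UNIV. dg ends a v) = (\<Sum>e\<in>UNIV. \<Sum>v\<in>UNIV. if v \<in> ends e then lk a e else 0)"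
    unfolding dg_def by (rule sum.swap)
  also have "\<dots> = (\<Sum>e\<in>UNIV. 2 * lk a e)"
  proof (rule sum.cong)
    fix e :: 'e
    have "(\<Sum>v\<in>UNIV. if v \<in> ends e then lk a e else 0) = (\<Sum>v\<in>UNIV \<inter> ends e. lk a e)"
      by (simp add: sum.inter_restrict[symmetric])
    also have "\<dots> = 2 * lk a e" using card2[of e] by simp
    finally show "(\<Sum>v\<in>UNIV. if v \<in> ends e then lk a e else 0) = 2 * lk a e" .
  qed simp
  finally show ?thesis unfolding sz_def by (simp add: sum_distrib_left)
qed

lemma dg_eq_sz: "dg ends a = dg ends b \<Longrightarrow> sz a = sz b"
  using sum_dg[of a] sum_dg[of b] by simp

lemma le_dg_eq: "le_pm q b \<Longrightarrow> dg ends q = dg ends b \<Longrightarrow> q = b"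
proof -
  assume le: "le_pm q b" and d: "dg ends q = dg ends b"
  have "b - q = 0" by (rule dg0_imp) (simp add: dg_diff[OF le] d)
  then show ?thesis using diff_add[OF le] by simp
qed

lemma two_edges: "e \<noteq> e' \<Longrightarrow> v \<in> ends e \<Longrightarrow> v \<in> ends e' \<Longrightarrow> lk a e + lk a e' \<le> dg ends a v"
proof -
  assume h: "e \<noteq> e'" "v \<in> ends e" "v \<in> ends e'"
  have "lk a e + lk a e' = (\<Sum>x\<in>{e, e'}. if v \<in> ends x then lk a x else 0)"
    using h by simp
  also have "\<dots> \<le> dg ends a v" unfolding dg_def by (intro sum_mono2) auto
  finally show ?thesis .
qed

lemma single_dg: "dg ends c = dg ends (Poly_Mapping.single e 1) \<Longrightarrow> c = Poly_Mapping.single e 1"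
proof -
  assume d: "dg ends c = dg ends (Poly_Mapping.single e 1)"
  have kc: "ks c \<subseteq> {e}"
  proof
    fix e' assume e': "e' \<in> ks c"
    have "ends e' \<subseteq> ends e"
    proof
      fix v assume "v \<in> ends e'"
      then have "lk c e' \<le> dg ends c v" by (rule dg_ge)
      moreover have "lk c e' > 0" using e' by (simp add: in_keys_iff)
      ultimately show "v \<in> ends e" using d by (auto simp: dg_single fun_eq_iff split: if_splits)
    qed
    then have "ends e' = ends e" using card2[of e] card2[of e']
      by (metis card_subset_eq finite)
    then show "e' \<in> {e}" using inj_ends by (auto dest: injD)
  qed
  obtain v where v: "v \<in> ends e" using ends_ne by blast
  have "dg ends c v = lk c e"
  proof -
    have "dg ends c v = (\<Sum>x\<in>UNIV. if x = e then lk c e else 0)"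
      unfolding dg_def
    proof (rule sum.cong)
      fix x :: 'e
      show "(if v \<in> ends x then lk c x else 0) = (if x = e then lk c e else 0)"
        using kc v by (cases "x = e") (auto simp: in_keys_iff)
    qed simp
    then show ?thesis by simp
  qed
  then have "lk c e = 1" using d v by (simp add: fun_eq_iff dg_single)
  then show ?thesis using kc
    by (intro poly_mapping_eqI) (auto simp: lk_single in_keys_iff)
qed

end


definition mincyc :: "('e::finite \<Rightarrow> 'v set) \<Rightarrow> ('e \<Rightarrow>\<^sub>0 nat) \<Rightarrow> ('e \<Rightarrow>\<^sub>0 nat) \<Rightarrow> bool" where
  "mincyc ends a b \<longleftrightarrow> a \<noteq> 0 \<and> dg ends a = dg ends b \<and> (\<forall>v. dg ends a v \<le> 1) \<and> ks a \<inter> ks b = {} \<and>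
     (\<forall>p q. le_pm p a \<longrightarrow> le_pm q b \<longrightarrow> dg ends p = dg ends q \<longrightarrow> p \<noteq> 0 \<longrightarrow> p = a)"

lemma ind_le: "P \<subseteq> ks a \<Longrightarrow> le_pm (ind P) (a :: 'e::finite \<Rightarrow>\<^sub>0 nat)"
  unfolding le_pm_def
proof
  fix e assume P: "P \<subseteq> ks a"
  show "lk (ind P) e \<le> lk a e"
  proof (cases "e \<in> P")
    case True then have "lk a e \<noteq> 0" using P by (auto simp: in_keys_iff)
    then show ?thesis using True by (simp add: lk_ind)
  qed (simp add: lk_ind)
qed

lemma card_cnt:
  assumes "finite Z" "inj_on k Z" "\<And>x. x \<in> Z \<Longrightarrow> k x \<noteq> x"
  shows "card {x\<in>Z. v = x \<or> v = k x} = (if v \<in> Z then 1 else 0) + (if v \<in> k ` Z then 1 else 0)"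
proof -
  have e1: "{x\<in>Z. v = x \<or> v = k x} = {x\<in>Z. x = v} \<union> {x\<in>Z. k x = v}" by auto
  have e2: "{x\<in>Z. x = v} \<inter> {x\<in>Z. k x = v} = {}" using assms(3) by auto
  have c1: "card {x\<in>Z. x = v} = (if v \<in> Z then 1 else 0)"
  proof (cases "v \<in> Z")
    case True then have "{x\<in>Z. x = v} = {v}" by auto
    then show ?thesis using True by simp
  next
    case False then have "{x\<in>Z. x = v} = {}" by auto
    then show ?thesis using False by simp
  qed
  have c2: "card {x\<in>Z. k x = v} = (if v \<in> k ` Z then 1 else 0)"
  proof (cases "v \<in> k ` Z")
    case True
    then obtain x0 where x0: "x0 \<in> Z" "v = k x0" by auto
    then have "{x\<in>Z. k x = v} = {x0}" using assms(2) by (auto dest: inj_onD)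
    then show ?thesis using True by simp
  next
    case False then have "{x\<in>Z. k x = v} = {}" by auto
    then show ?thesis using False by (simp only: card.empty) simp
  qed
  show ?thesis unfolding e1 using e2 c1 c2 assms(1) by (simp add: card_Un_disjoint)
qed

context bip
begin

lemma oth: "x \<in> ends e \<Longrightarrow> x \<in> X \<Longrightarrow> \<exists>y. ends e = {x, y} \<and> y \<notin> X"
  using bipX[of e] by auto

lemma oth2: "y \<in> ends e \<Longrightarrow> y \<notin> X \<Longrightarrow> \<exists>x. ends e = {y, x} \<and> x \<in> X"
  using bipX[of e] by (auto simp: insert_commute)

lemma a_side: "\<exists>ea f. \<forall>x. x \<in> X \<longrightarrow> dg ends a x \<noteq> 0 \<longrightarrow> ea x \<in> ks a \<and> f x \<notin> X \<and> ends (ea x) = {x, f x}"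
proof -
  have "\<forall>x. \<exists>ey. x \<in> X \<longrightarrow> dg ends a x \<noteq> 0 \<longrightarrow> fst ey \<in> ks a \<and> snd ey \<notin> X \<and> ends (fst ey) = {x, snd ey}"
  proof
    fix x
    show "\<exists>ey. x \<in> X \<longrightarrow> dg ends a x \<noteq> 0 \<longrightarrow> fst ey \<in> ks a \<and> snd ey \<notin> X \<and> ends (fst ey) = {x, snd ey}"
    proof (cases "x \<in> X \<and> dg ends a x \<noteq> 0")
      case True
      then obtain e where e: "e \<in> ks a" "x \<in> ends e" by (auto simp: dg_eq0)
      then obtain y where "ends e = {x, y} \<and> y \<notin> X" using oth True by blast
      then show ?thesis using e by (intro exI[of _ "(e, y)"]) auto
    qed auto
  qed
  then obtain F where "\<forall>x. x \<in> X \<longrightarrow> dg ends a x \<noteq> 0 \<longrightarrow> fst (F x) \<in> ks a \<and> snd (F x) \<notin> X \<and> ends (fst (F x)) = {x, snd (F x)}"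
    by metis
  then show ?thesis by (intro exI[of _ "fst \<circ> F"] exI[of _ "snd \<circ> F"]) auto
qed

lemma b_side: "\<exists>eb g. \<forall>y. y \<notin> X \<longrightarrow> dg ends b y \<noteq> 0 \<longrightarrow> eb y \<in> ks b \<and> g y \<in> X \<and> ends (eb y) = {y, g y}"
proof -
  have "\<forall>y. \<exists>ex. y \<notin> X \<longrightarrow> dg ends b y \<noteq> 0 \<longrightarrow> fst ex \<in> ks b \<and> snd ex \<in> X \<and> ends (fst ex) = {y, snd ex}"
  proof
    fix y
    show "\<exists>ex. y \<notin> X \<longrightarrow> dg ends b y \<noteq> 0 \<longrightarrow> fst ex \<in> ks b \<and> snd ex \<in> X \<and> ends (fst ex) = {y, snd ex}"
    proof (cases "y \<notin> X \<and> dg ends b y \<noteq> 0")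
      case True
      then obtain e where e: "e \<in> ks b" "y \<in> ends e" by (auto simp: dg_eq0)
      then obtain x where "ends e = {y, x} \<and> x \<in> X" using oth2 True by blast
      then show ?thesis using e by (intro exI[of _ "(e, x)"]) auto
    qed auto
  qed
  then obtain F where "\<forall>y. y \<notin> X \<longrightarrow> dg ends b y \<noteq> 0 \<longrightarrow> fst (F y) \<in> ks b \<and> snd (F y) \<in> X \<and> ends (fst (F y)) = {y, snd (F y)}"
    by metis
  then show ?thesis by (intro exI[of _ "fst \<circ> F"] exI[of _ "snd \<circ> F"]) auto
qed

lemma GW:
  fixes Z0 :: "'v set" and f g :: "'v \<Rightarrow> 'v" and ea eb :: "'v \<Rightarrow> 'e"
  assumes Z0: "Z0 \<noteq> {}" "Z0 \<subseteq> X"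
    and hf: "\<And>x. x \<in> Z0 \<Longrightarrow> f x \<notin> X \<and> ends (ea x) = {x, f x}"
    and hg: "\<And>x. x \<in> Z0 \<Longrightarrow> g (f x) \<in> Z0 \<and> ends (eb (f x)) = {f x, g (f x)}"
  shows "\<exists>Z. Z \<noteq> {} \<and> Z \<subseteq> Z0 \<and> (g \<circ> f) ` Z = Z \<and> inj_on ea Z \<and> inj_on f Z
     \<and> dg ends (ind (ea ` Z)) = dg ends (ind (eb ` f ` Z)) \<and> (\<forall>v. dg ends (ind (ea ` Z)) v \<le> 1)"
proof -
  define h where "h = g \<circ> f"
  have hZ0: "h ` Z0 \<subseteq> Z0" using hg by (auto simp: h_def)
  define S where "S k = (h ^^ k) ` Z0" for k
  have S_Suc: "S (Suc k) = h ` S k" for k by (simp add: S_def image_comp)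
  have S_sub: "S (Suc k) \<subseteq> S k" for k
  proof (induction k)
    case 0 show ?case using hZ0 by (simp add: S_Suc) (simp add: S_def)
  next
    case (Suc k) then show ?case by (simp add: S_Suc image_mono)
  qed
  have S_ne: "S k \<noteq> {}" for k using Z0 by (simp add: S_def)
  have "\<exists>k. S (Suc k) = S k"
  proof (rule ccontr)
    assume "\<not> ?thesis"
    then have lt: "card (S (Suc k)) < card (S k)" for k using S_sub
      by (metis finite psubsetI psubset_card_mono)
    have le: "card (S k) + k \<le> card Z0" for k
    proof (induction k)
      case 0 then show ?case by (simp add: S_def)
    next
      case (Suc k) then show ?case using lt[of k] by simp
    qed
    have "card (S (card Z0)) = 0" using le[of "card Z0"] by simp
    then show False using S_ne by simp
  qed
  then obtain k where k: "h ` S k = S k" using S_Suc by metis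
  define Z where "Z = S k"
  have SZ0: "S j \<subseteq> Z0" for j
  proof (induction j)
    case 0 then show ?case by (simp add: S_def)
  next
    case (Suc j) then show ?case using S_sub[of j] by blast
  qed
  have ZZ0: "Z \<subseteq> Z0" using SZ0 by (simp add: Z_def)
  have Zne: "Z \<noteq> {}" using S_ne by (simp add: Z_def)
  have hZ: "h ` Z = Z" using k by (simp add: Z_def)
  have finZ: "finite Z" by simp
  have injh: "inj_on h Z" using hZ finZ by (simp add: eq_card_imp_inj_on)
  have injf: "inj_on f Z" using injh unfolding h_def inj_on_def by auto
  have injg: "inj_on g (f ` Z)"
    using injh unfolding h_def inj_on_def by auto
  have ZX: "x \<in> Z \<Longrightarrow> x \<in> X" for x using ZZ0 Z0 by blast
  have injea: "inj_on ea Z"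
  proof (rule inj_onI)
    fix x y assume xy: "x \<in> Z" "y \<in> Z" "ea x = ea y"
    then have "{x, f x} = {y, f y}" using hf ZZ0 by (metis subsetD)
    then show "x = y" using xy ZX hf ZZ0 by (metis doubleton_eq_iff subsetD)
  qed
  have injeb: "inj_on eb (f ` Z)"
  proof (rule inj_onI)
    fix y1 y2 assume yy: "y1 \<in> f ` Z" "y2 \<in> f ` Z" "eb y1 = eb y2"
    then obtain x1 x2 where x: "x1 \<in> Z0" "x2 \<in> Z0" "y1 = f x1" "y2 = f x2" using ZZ0 by auto
    then have "{f x1, g (f x1)} = {f x2, g (f x2)}" using hg yy by metis
    moreover have "f x1 \<notin> X" "f x2 \<notin> X" using x hf by auto
    moreover have "g (f x1) \<in> Z0" "g (f x2) \<in> Z0" using x hg by auto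
    then have "g (f x1) \<in> X" "g (f x2) \<in> X" using Z0(2) by auto
    ultimately show "y1 = y2" using x by (metis doubleton_eq_iff)
  qed
  have dP: "dg ends (ind (ea ` Z)) v = (if v \<in> Z then 1 else 0) + (if v \<in> f ` Z then 1 else 0)" for v
  proof -
    have "{e \<in> ea ` Z. v \<in> ends e} = ea ` {x\<in>Z. v = x \<or> v = f x}"
      using hf ZZ0 by auto
    then have "card {e \<in> ea ` Z. v \<in> ends e} = card {x\<in>Z. v = x \<or> v = f x}"
      using injea by (simp add: card_image inj_on_subset)
    also have "\<dots> = (if v \<in> Z then 1 else 0) + (if v \<in> f ` Z then 1 else 0)"
    proof (intro card_cnt)
      fix x assume "x \<in> Z"
      then have "f x \<notin> X" "x \<in> X" using hf ZZ0 ZX by auto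
      then show "f x \<noteq> x" by auto
    qed (use injf in auto)
    finally show ?thesis by (simp add: dg_ind)
  qed
  have dQ: "dg ends (ind (eb ` f ` Z)) v = (if v \<in> f ` Z then 1 else 0) + (if v \<in> Z then 1 else 0)" for v
  proof -
    have "{e \<in> eb ` f ` Z. v \<in> ends e} = eb ` {y\<in>f ` Z. v = y \<or> v = g y}"
      using hg ZZ0 by auto
    then have "card {e \<in> eb ` f ` Z. v \<in> ends e} = card {y\<in>f ` Z. v = y \<or> v = g y}"
      using injeb by (simp add: card_image inj_on_subset)
    also have "\<dots> = (if v \<in> f ` Z then 1 else 0) + (if v \<in> g ` f ` Z then 1 else 0)"
    proof (intro card_cnt)
      show "finite (f ` Z)" by simp
      show "inj_on g (f ` Z)" by (rule injg)
      fix y assume "y \<in> f ` Z"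
      then obtain x where x: "x \<in> Z0" "y = f x" using ZZ0 by auto
      then have "g y \<in> Z0" "y \<notin> X" using hf hg by auto
      then show "g y \<noteq> y" using Z0(2) by auto
    qed
    also have "g ` f ` Z = Z" using hZ by (simp add: h_def image_comp)
    finally show ?thesis by (simp add: dg_ind)
  qed
  have le1: "dg ends (ind (ea ` Z)) v \<le> 1" for v
    unfolding dP using hf ZZ0 ZX by auto
  show ?thesis
    by (intro exI[of _ Z]) (use Zne ZZ0 hZ injea injf dP dQ le1 in \<open>auto simp: h_def fun_eq_iff\<close>)
qed

lemma find_cyc:
  assumes d: "dg ends a = dg ends b" and a0: "a \<noteq> 0"
  shows "\<exists>p q. le_pm p a \<and> le_pm q b \<and> dg ends p = dg ends q \<and> p \<noteq> 0 \<and> (\<forall>v. dg ends p v \<le> 1)"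
proof -
  obtain ea f where A: "\<And>x. x \<in> X \<Longrightarrow> dg ends a x \<noteq> 0 \<Longrightarrow> ea x \<in> ks a \<and> f x \<notin> X \<and> ends (ea x) = {x, f x}"
    using a_side[of a] by metis
  obtain eb g where B: "\<And>y. y \<notin> X \<Longrightarrow> dg ends b y \<noteq> 0 \<Longrightarrow> eb y \<in> ks b \<and> g y \<in> X \<and> ends (eb y) = {y, g y}"
    using b_side[of b] by metis
  define Z0 where "Z0 = {x \<in> X. dg ends a x \<noteq> 0}"
  have Z0ne: "Z0 \<noteq> {}"
  proof -
    obtain e where e: "e \<in> ks a" using a0 by (metis keys_eq_empty ex_in_conv)
    obtain x y where "ends e = {x, y}" "x \<in> X" using bipX[of e] by blast
    then have "x \<in> X" "lk a e \<le> dg ends a x" by (auto intro: dg_ge)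
    then show ?thesis using e unfolding Z0_def by (auto simp: in_keys_iff)
  qed
  have hf: "f x \<notin> X \<and> ends (ea x) = {x, f x}" if "x \<in> Z0" for x
    using A that unfolding Z0_def by blast
  have hg: "g (f x) \<in> Z0 \<and> ends (eb (f x)) = {f x, g (f x)}" if x: "x \<in> Z0" for x
  proof -
    have ax: "ea x \<in> ks a" "f x \<notin> X" "ends (ea x) = {x, f x}" using A x unfolding Z0_def by auto
    have "lk a (ea x) \<le> dg ends a (f x)" using ax by (intro dg_ge) auto
    then have "dg ends b (f x) \<noteq> 0" using ax d by (auto simp: in_keys_iff fun_eq_iff)
    then have bx: "eb (f x) \<in> ks b" "g (f x) \<in> X" "ends (eb (f x)) = {f x, g (f x)}" using B ax by auto
    have "lk b (eb (f x)) \<le> dg ends b (g (f x))" using bx by (intro dg_ge) auto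
    then have "dg ends a (g (f x)) \<noteq> 0" using bx d by (auto simp: in_keys_iff fun_eq_iff)
    then show ?thesis using bx unfolding Z0_def by auto
  qed
  obtain Z where Z: "Z \<noteq> {}" "Z \<subseteq> Z0" "dg ends (ind (ea ` Z)) = dg ends (ind (eb ` f ` Z))"
    "\<forall>v. dg ends (ind (ea ` Z)) v \<le> 1"
    using GW[of Z0 f ea g eb] Z0ne hf hg unfolding Z0_def by blast
  have Pa: "ea ` Z \<subseteq> ks a" using Z(2) A unfolding Z0_def by auto
  have Qb: "eb ` f ` Z \<subseteq> ks b"
  proof
    fix e assume "e \<in> eb ` f ` Z"
    then obtain x where x: "x \<in> Z" "e = eb (f x)" by auto
    have ax: "ea x \<in> ks a" "f x \<notin> X" "ends (ea x) = {x, f x}" using A x Z(2) unfolding Z0_def by auto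
    have "lk a (ea x) \<le> dg ends a (f x)" using ax by (intro dg_ge) auto
    then have "dg ends b (f x) \<noteq> 0" using ax d by (auto simp: in_keys_iff fun_eq_iff)
    then show "e \<in> ks b" using B ax x by auto
  qed
  have lp: "le_pm (ind (ea ` Z)) a" using Pa by (rule ind_le)
  have lq: "le_pm (ind (eb ` f ` Z)) b" using Qb by (rule ind_le)
  obtain z where "z \<in> Z" using Z(1) by blast
  then have "lk (ind (ea ` Z)) (ea z) = 1" by (simp add: lk_ind)
  then have "ind (ea ` Z) \<noteq> 0" by auto
  then show ?thesis using lp lq Z by blast
qed

end


context bip
begin

lemma chord_split:
  assumes mc: "mincyc ends a b" and ena: "e \<notin> ks a" and enb: "e \<notin> ks b"
    and ch: "\<forall>v\<in>ends e. dg ends a v \<noteq> 0"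
  shows "\<exists>p q. le_pm p a \<and> le_pm q b \<and> p \<noteq> a \<and> 2 \<le> sz p \<and>
     (\<forall>v. dg ends p v = dg ends q v + dg ends (Poly_Mapping.single e 1) v)"
proof -
  have d: "dg ends a = dg ends b"
    and minl: "\<And>p q. le_pm p a \<Longrightarrow> le_pm q b \<Longrightarrow> dg ends p = dg ends q \<Longrightarrow> p \<noteq> 0 \<Longrightarrow> p = a"
    using mc unfolding mincyc_def by auto
  obtain w1 w2 where w: "ends e = {w1, w2}" "w1 \<in> X" "w2 \<notin> X" using bipX[of e] by blast
  have dw1: "dg ends a w1 \<noteq> 0" and dw2: "dg ends a w2 \<noteq> 0" using ch w by auto
  obtain ea f where A: "\<And>x. x \<in> X \<Longrightarrow> dg ends a x \<noteq> 0 \<Longrightarrow> ea x \<in> ks a \<and> f x \<notin> X \<and> ends (ea x) = {x, f x}"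
    using a_side[of a] by metis
  obtain eb g where B: "\<And>y. y \<notin> X \<Longrightarrow> dg ends b y \<noteq> 0 \<Longrightarrow> eb y \<in> ks b \<and> g y \<in> X \<and> ends (eb y) = {y, g y}"
    using b_side[of b] by metis
  define eb' where "eb' y = (if y = w2 then e else eb y)" for y
  define g' where "g' y = (if y = w2 then w1 else g y)" for y
  define Z0 where "Z0 = {x \<in> X. dg ends a x \<noteq> 0}"
  have Z0ne: "Z0 \<noteq> {}" using w dw1 unfolding Z0_def by auto
  have hf: "f x \<notin> X \<and> ends (ea x) = {x, f x}" if "x \<in> Z0" for x
    using A that unfolding Z0_def by blast
  have fb: "dg ends b (f x) \<noteq> 0" if x: "x \<in> Z0" for x
  proof -
    have ax: "ea x \<in> ks a" "f x \<notin> X" "ends (ea x) = {x, f x}" using A x unfolding Z0_def by auto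
    have "lk a (ea x) \<le> dg ends a (f x)" using ax by (intro dg_ge) auto
    then show ?thesis using ax d by (auto simp: in_keys_iff fun_eq_iff)
  qed
  have hg: "g' (f x) \<in> Z0 \<and> ends (eb' (f x)) = {f x, g' (f x)}" if x: "x \<in> Z0" for x
  proof (cases "f x = w2")
    case True
    then show ?thesis using w dw1 unfolding g'_def eb'_def Z0_def by (auto simp: insert_commute)
  next
    case False
    have fx: "f x \<notin> X" using hf x by blast
    have bx: "eb (f x) \<in> ks b" "g (f x) \<in> X" "ends (eb (f x)) = {f x, g (f x)}" using B fx fb[OF x] by auto
    have "lk b (eb (f x)) \<le> dg ends b (g (f x))" using bx by (intro dg_ge) auto
    then have "dg ends a (g (f x)) \<noteq> 0" using bx d by (auto simp: in_keys_iff fun_eq_iff)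
    then show ?thesis using bx False unfolding Z0_def g'_def eb'_def by auto
  qed
  obtain Z where Z: "Z \<noteq> {}" "Z \<subseteq> Z0" "(g' \<circ> f) ` Z = Z" "inj_on ea Z" "inj_on f Z"
    "dg ends (ind (ea ` Z)) = dg ends (ind (eb' ` f ` Z))"
    using GW[of Z0 f ea g' eb'] Z0ne hf hg unfolding Z0_def by blast
  have Pa: "ea ` Z \<subseteq> ks a" using Z(2) A unfolding Z0_def by auto
  have ebY: "eb' y \<in> ks b" if "y \<in> f ` Z" "y \<noteq> w2" for y
  proof -
    from that(1) obtain x where x0: "x \<in> Z" "y = f x" by blast
    then have x: "x \<in> Z0" "y = f x" using Z(2) by auto
    then show ?thesis using B hf fb that unfolding eb'_def by auto
  qed
  have p0: "ind (ea ` Z) \<noteq> 0"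
  proof -
    obtain z where "z \<in> Z" using Z(1) by blast
    then have "lk (ind (ea ` Z)) (ea z) = 1" by (simp add: lk_ind)
    then show ?thesis by auto
  qed
  have w2Z: "w2 \<in> f ` Z"
  proof (rule ccontr)
    assume nw: "w2 \<notin> f ` Z"
    then have Qb: "eb' ` f ` Z \<subseteq> ks b" using ebY by auto
    have "ind (ea ` Z) = a" using minl[OF ind_le[OF Pa] ind_le[OF Qb] Z(6) p0] by simp
    then have ka: "ks a = ea ` Z" by (metis ks_ind finite)
    from dw2 obtain e' where e': "e' \<in> ks a" "w2 \<in> ends e'" by (auto simp: dg_eq0)
    then obtain z where z: "z \<in> Z" "e' = ea z" using ka by auto
    then have "w2 \<in> {z, f z}" "z \<in> X" using hf Z(2) e' unfolding Z0_def by auto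
    then have "w2 = f z" using w by auto
    then show False using nw z by auto
  qed
  define Y' where "Y' = f ` Z - {w2}"
  have Q'b: "eb ` Y' \<subseteq> ks b"
  proof
    fix x assume "x \<in> eb ` Y'"
    then obtain y where y: "y \<in> Y'" "x = eb y" by blast
    then have "y \<in> f ` Z" "y \<noteq> w2" unfolding Y'_def by auto
    then have "eb' y \<in> ks b" by (rule ebY)
    then show "x \<in> ks b" using y \<open>y \<noteq> w2\<close> unfolding eb'_def by simp
  qed
  have eQ: "e \<notin> eb ` Y'" using Q'b enb by blast
  have Qeq: "eb' ` f ` Z = insert e (eb ` Y')"
  proof -
    have fZ: "f ` Z = insert w2 Y'" using w2Z unfolding Y'_def by auto
    have "eb' ` Y' = eb ` Y'" by (rule image_cong) (auto simp: Y'_def eb'_def)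
    moreover have "eb' w2 = e" by (simp add: eb'_def)
    ultimately show ?thesis unfolding fZ by simp
  qed
  have indQ: "ind (eb' ` f ` Z) = Poly_Mapping.single e 1 + ind (eb ` Y')"
    by (simp add: Qeq ind_insert eQ)
  define p where "p = ind (ea ` Z)"
  define q where "q = ind (eb ` Y')"
  have lp: "le_pm p a" unfolding p_def by (rule ind_le[OF Pa])
  have lq: "le_pm q b" unfolding q_def by (rule ind_le[OF Q'b])
  have dpq: "\<forall>v. dg ends p v = dg ends q v + dg ends (Poly_Mapping.single e 1) v"
    using Z(6) indQ unfolding p_def q_def by (simp add: fun_eq_iff dg_add)
  have szp: "sz p = card Z" unfolding p_def by (simp add: sz_ind card_image Z(4))
  have c2: "2 \<le> card Z"
  proof (rule ccontr)
    assume "\<not> 2 \<le> card Z"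
    moreover have "card Z > 0" using Z(1) by (simp add: card_gt_0_iff)
    ultimately have "card Z = 1" by linarith
    then obtain z where Zz: "Z = {z}" by (metis card_1_singletonE)
    then have fz: "f z = w2" using w2Z by simp
    moreover have "g' (f z) = z" using Z(3) Zz by simp
    ultimately have zw: "z = w1" by (simp add: g'_def)
    have z0: "z \<in> Z0" using Zz Z(2) by simp
    then have "ends (ea z) = {z, f z}" using hf by blast
    then have "ends (ea z) = ends e" using w fz zw by simp
    then have "ea z = e" using inj_ends by (simp add: inj_eq)
    moreover have "ea z \<in> ks a" using A z0 unfolding Z0_def by blast
    ultimately show False using ena by simp
  qed
  have pa: "p \<noteq> a"
  proof
    assume "p = a"
    then have "dg ends (b - q) v = dg ends (Poly_Mapping.single e 1) v" for v
    proof -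
      have "dg ends b v = dg ends q v + dg ends (Poly_Mapping.single e 1) v"
        using dpq \<open>p = a\<close> d by (metis)
      then show ?thesis using dg_diff[OF lq, where v=v and ends=ends] by simp
    qed
    then have "b - q = Poly_Mapping.single e 1" using single_dg by (auto simp: fun_eq_iff)
    then have "lk b e - lk q e = 1" using lk_diff[of b q e] by (simp add: lk_single)
    then have "e \<in> ks b" by (simp add: in_keys_iff)
    with enb show False ..
  qed
  show ?thesis using lp lq pa c2 szp dpq by (intro exI[of _ p] exI[of _ q]) auto
qed

lemma gen:
  fixes J :: "('e, 'k::field) mpoly set"
  assumes J: "closed_ideal J"
    and H1: "\<And>a b. mincyc ends a b \<Longrightarrow> (\<forall>e. (\<forall>v\<in>ends e. dg ends a v \<noteq> 0) \<longrightarrow> e \<in> ks a \<or> e \<in> ks b)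
        \<Longrightarrow> (bin a b :: ('e, 'k) mpoly) \<in> J"
  shows "dg ends a = dg ends b \<Longrightarrow> (bin a b :: ('e, 'k) mpoly) \<in> J"
proof -
  have "\<forall>a b. sz a = n \<longrightarrow> dg ends a = dg ends b \<longrightarrow> (bin a b :: ('e, 'k) mpoly) \<in> J" for n
  proof (induction n rule: less_induct)
    case (less n)
    have IH: "\<And>a b. sz a < n \<Longrightarrow> dg ends a = dg ends b \<Longrightarrow> (bin a b :: ('e, 'k) mpoly) \<in> J"
      using less by blast
    have common: "(bin a b :: ('e, 'k) mpoly) \<in> J"
      if h: "sz a = n" "dg ends a = dg ends b" "e \<in> ks a" "e \<in> ks b" for a b e
    proof -
      let ?s = "Poly_Mapping.single e (1::nat)"
      have la: "le_pm ?s a" and lb: "le_pm ?s b" using h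
        by (auto simp: le_pm_def lk_single in_keys_iff Suc_le_eq)
      have "a - ?s \<noteq> a" using h(3) by (metis add_diff add_diff_cancel_left' add_diff_cancel_right' diff_add la
            lk_diff lk_single diff_zero in_keys_iff zero_neq_one cancel_comm_monoid_add_class.diff_cancel)
      then have "sz (a - ?s) < n" using h(1) le_pm_sz_less[of "a - ?s" a]
        by (simp add: le_pm_def lk_diff)
      moreover have "dg ends (a - ?s) = dg ends (b - ?s)"
      proof
        fix v show "dg ends (a - ?s) v = dg ends (b - ?s) v"
          using dg_diff[OF la, where v=v] dg_diff[OF lb, where v=v] fun_cong[OF h(2), where x=v] by simp
      qed
      ultimately have "(bin (a - ?s) (b - ?s) :: ('e, 'k) mpoly) \<in> J" using IH by blast
      then have "mon ?s * bin (a - ?s) (b - ?s) \<in> J" using J ci_mult by blast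
      moreover have "mon ?s * (bin (a - ?s) (b - ?s) :: ('e, 'k) mpoly) = bin a b"
      proof -
        have e1: "?s + (a - ?s) = a" by (metis diff_add[OF la] add.commute)
        have e2: "?s + (b - ?s) = b" by (metis diff_add[OF lb] add.commute)
        have "mon ?s * (bin (a - ?s) (b - ?s) :: ('e, 'k) mpoly) = mon (?s + (a - ?s)) - mon (?s + (b - ?s))"
          unfolding bin_def by (simp only: right_diff_distrib mon_mult)
        also have "\<dots> = bin a b" by (simp only: e1 e2 bin_def)
        finally show ?thesis .
      qed
      ultimately show ?thesis by simp
    qed
    show ?case
    proof (intro allI impI)
      fix a b :: "'e \<Rightarrow>\<^sub>0 nat" assume n: "sz a = n" and d: "dg ends a = dg ends b"
      show "(bin a b :: ('e, 'k) mpoly) \<in> J"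
      proof (cases "\<exists>e. e \<in> ks a \<and> e \<in> ks b")
        case True then show ?thesis using common n d by blast
      next
        case False
        then have disj: "ks a \<inter> ks b = {}" by auto
        show ?thesis
        proof (cases "a = 0")
          case True
          then have "b = 0" using d dg0_imp by (metis dg_zero)
          then show ?thesis using True J ci_zero by (simp add: bin_def)
        next
          case False
          define C where "C p \<longleftrightarrow> (\<exists>q. le_pm p a \<and> le_pm q b \<and> dg ends p = dg ends q \<and> p \<noteq> 0 \<and> (\<forall>v. dg ends p v \<le> 1))" for p
          obtain p0 where "C p0" using find_cyc[OF d False] unfolding C_def by blast
          then obtain p where Cp: "C p" and pmin: "\<And>p'. C p' \<Longrightarrow> sz p \<le> sz p'"
            using ex_has_least_nat[where P=C and m=sz] by blast
          then obtain q where pq: "le_pm p a" "le_pm q b" "dg ends p = dg ends q" "p \<noteq> 0" "\<forall>v. dg ends p v \<le> 1"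
            unfolding C_def by blast
          show ?thesis
          proof (cases "p = a")
            case False
            have "sz p < n" using le_pm_sz_less pq(1) False n by blast
            then have bpq: "(bin p q :: ('e, 'k) mpoly) \<in> J" using IH pq(3) by blast
            define a' where "a' = a - p + q"
            have d': "dg ends a' = dg ends b"
            proof
              fix v
              have "dg ends p v \<le> dg ends a v" using dg_mono[OF pq(1)] .
              then show "dg ends a' v = dg ends b v" unfolding a'_def
                using d pq(3) by (simp add: dg_add dg_diff[OF pq(1)] fun_eq_iff)
            qed
            have szpq: "sz p = sz q" using dg_eq_sz[OF pq(3)] .
            have "sz p \<le> sz a" using le_pm_sz_less[OF pq(1)] False by fastforce
            then have sza': "sz a' = n" unfolding a'_def using n szpq by (simp add: sz_add sz_diff[OF pq(1)])
            have "q \<noteq> 0"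
            proof
              assume "q = 0"
              then have "p = 0" using pq(3) dg0_imp by (metis dg_zero)
              then show False using pq(4) by simp
            qed
            then obtain e where e: "e \<in> ks q" by (metis keys_eq_empty ex_in_conv)
            then have "e \<in> ks b" using le_pm_keys[OF pq(2)] by blast
            moreover have "e \<in> ks a'" using e unfolding a'_def by (simp add: in_keys_iff lookup_add)
            ultimately have "(bin a' b :: ('e, 'k) mpoly) \<in> J" using common sza' d' by blast
            moreover have "(bin a b :: ('e, 'k) mpoly) = mon (a - p) * bin p q + bin a' b"
              unfolding bin_def a'_def by (simp add: right_diff_distrib mon_mult diff_add[OF pq(1)])
            ultimately show ?thesis using bpq J ci_add ci_mult by metis
          next
            case True
            have qb: "q = b" using le_dg_eq[OF pq(2)] pq(3) True d by simp
            have mc: "mincyc ends a b"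
              unfolding mincyc_def
            proof (intro conjI allI impI)
              show "a \<noteq> 0" by fact
              show "dg ends a = dg ends b" by fact
              show "dg ends a v \<le> 1" for v using pq(5) True by simp
              show "ks a \<inter> ks b = {}" by fact
              fix p' q' assume h: "le_pm p' a" "le_pm q' b" "dg ends p' = dg ends q'" "p' \<noteq> 0"
              have "dg ends p' v \<le> 1" for v using dg_mono[OF h(1), where v=v and ends=ends] pq(5)[rule_format, of v] True by simp
              then have "C p'" using h unfolding C_def by blast
              then have "sz a \<le> sz p'" using pmin True by blast
              then show "p' = a" using le_pm_sz_eq h(1) by blast
            qed
            show ?thesis
            proof (cases "\<forall>e. (\<forall>v\<in>ends e. dg ends a v \<noteq> 0) \<longrightarrow> e \<in> ks a \<or> e \<in> ks b")
              case True then show ?thesis using H1 mc by blast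
            next
              case False
              then obtain e where ch: "\<forall>v\<in>ends e. dg ends a v \<noteq> 0" "e \<notin> ks a" "e \<notin> ks b" by blast
              let ?s = "Poly_Mapping.single e (1::nat)"
              obtain p q where pq: "le_pm p a" "le_pm q b" "p \<noteq> a" "2 \<le> sz p"
                  "\<forall>v. dg ends p v = dg ends q v + dg ends ?s v"
                using chord_split[OF mc ch(2) ch(3) ch(1)] by blast
              have "sz p < n" using le_pm_sz_less pq(1) pq(3) n by blast
              moreover have "dg ends p = dg ends (q + ?s)" using pq(5) by (simp add: fun_eq_iff dg_add)
              ultimately have b1: "(bin p (q + ?s) :: ('e, 'k) mpoly) \<in> J" using IH by blast
              have "sz p \<le> sz a" using le_pm_sz_less[OF pq(1)] pq(3) by fastforce
              then have "sz (a - p + ?s) < n" using n pq(4) by (simp add: sz_add sz_diff[OF pq(1)] sz_single)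
              moreover have "dg ends (a - p + ?s) = dg ends (b - q)"
              proof
                fix v
                have "dg ends p v \<le> dg ends a v" "dg ends q v \<le> dg ends b v"
                  using dg_mono[OF pq(1), where v=v and ends=ends] dg_mono[OF pq(2), where v=v and ends=ends] by auto
                then show "dg ends (a - p + ?s) v = dg ends (b - q) v"
                  using d pq(5)[rule_format, where v=v] by (simp add: dg_add dg_diff[OF pq(1)] dg_diff[OF pq(2)] fun_eq_iff)
              qed
              ultimately have b2: "(bin (a - p + ?s) (b - q) :: ('e, 'k) mpoly) \<in> J" using IH by blast
              have "(bin a b :: ('e, 'k) mpoly) = mon (a - p) * bin p (q + ?s) + mon q * bin (a - p + ?s) (b - q)"
              proof -
                have abel: "\<And>x y z :: ('e, 'k) mpoly. x - y + (y - z) = x - z"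
                  by (metis diff_add_cancel add_diff_eq)
                have e1: "a - p + p = a" using diff_add[OF pq(1)] .
                have e2: "q + (b - q) = b" using diff_add[OF pq(2)] by (simp add: add.commute)
                have e3: "a - p + (q + ?s) = q + (a - p + ?s)" by (simp add: ac_simps)
                have "mon (a - p) * bin p (q + ?s) + mon q * bin (a - p + ?s) (b - q)
                   = mon (a - p + p) - mon (a - p + (q + ?s)) + (mon (q + (a - p + ?s)) - mon (q + (b - q)))"
                  by (simp only: bin_def right_diff_distrib mon_mult)
                also have "\<dots> = (bin a b :: ('e, 'k) mpoly)"
                  by (simp only: e1 e2 e3 bin_def abel)
                finally show ?thesis by (rule sym)
              qed
              then show ?thesis using b1 b2 J by (metis ci_add ci_mult)
            qed
          qed
        qed
      qed
    qed
  qed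
  then show "dg ends a = dg ends b \<Longrightarrow> (bin a b :: ('e, 'k) mpoly) \<in> J" by blast
qed

end


lemma A_deg_diff: "le_pm y x \<Longrightarrow> A_deg A (x - y) i = A_deg A x i - A_deg A y i"
  using A_deg_add[of A "x - y" y i] diff_add[of y x] by simp

lemma fiber_other:
  assumes "finite F" "sum h F = (0::'a::comm_monoid_add)" "t \<in> F" "h t \<noteq> 0"
  shows "\<exists>t'\<in>F. t' \<noteq> t"
proof (rule ccontr)
  assume "\<not> ?thesis"
  then have "F = {t}" using assms(3) by blast
  then show False using assms(2,4) by simp
qed

lemma ks_add_right: "ks (y :: 'e \<Rightarrow>\<^sub>0 nat) \<subseteq> ks (x + y)"
  by (auto simp: in_keys_iff lookup_add)

lemma ks_add_left: "ks (x :: 'e \<Rightarrow>\<^sub>0 nat) \<subseteq> ks (x + y)"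
  by (auto simp: in_keys_iff lookup_add)

lemma SU_closed: "closed_ideal {h :: ('e, 'k::field) mpoly. \<forall>t\<in>ks h. \<not> ks t \<subseteq> U}"
  unfolding closed_ideal_def
proof (intro conjI ballI allI)
  show "0 \<in> {h :: ('e, 'k) mpoly. \<forall>t\<in>ks h. \<not> ks t \<subseteq> U}" by simp
next
  fix f g :: "('e, 'k) mpoly"
  assume "f \<in> {h. \<forall>t\<in>ks h. \<not> ks t \<subseteq> U}" "g \<in> {h. \<forall>t\<in>ks h. \<not> ks t \<subseteq> U}"
  then show "f + g \<in> {h. \<forall>t\<in>ks h. \<not> ks t \<subseteq> U}" using keys_add[of f g] by blast
next
  fix r f :: "('e, 'k) mpoly"
  assume f: "f \<in> {h. \<forall>t\<in>ks h. \<not> ks t \<subseteq> U}"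
  show "r * f \<in> {h. \<forall>t\<in>ks h. \<not> ks t \<subseteq> U}"
  proof (intro CollectI ballI)
    fix t assume "t \<in> ks (r * f)"
    then obtain x y where xy: "t = x + y" "x \<in> ks r" "y \<in> ks f" using keys_mult[of r f] by blast
    then have "\<not> ks y \<subseteq> U" using f by blast
    then show "\<not> ks t \<subseteq> U" using ks_add_right[of y x] xy(1) by blast
  qed
qed

lemma pow_bin:
  fixes a b :: "'e \<Rightarrow>\<^sub>0 nat"
  assumes aU: "ks a \<subseteq> U" and bU: "\<not> ks b \<subseteq> U"
  shows "\<exists>m. ks m \<subseteq> U \<and> (bin a b :: ('e, 'k::field) mpoly) ^ n - mon m \<in> {h. \<forall>t\<in>ks h. \<not> ks t \<subseteq> U}"
proof (induction n)
  case 0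
  have "(bin a b :: ('e, 'k) mpoly) ^ 0 - mon 0 = 0" by (simp add: mon_def)
  then show ?case by (intro exI[of _ 0]) simp
next
  case (Suc n)
  let ?S = "{h :: ('e, 'k) mpoly. \<forall>t\<in>ks h. \<not> ks t \<subseteq> U}"
  have cS: "closed_ideal ?S" by (rule SU_closed)
  from Suc obtain m where m: "ks m \<subseteq> U" "(bin a b :: ('e, 'k) mpoly) ^ n - mon m \<in> ?S" by blast
  have mb: "(mon (b + m) :: ('e, 'k) mpoly) \<in> ?S"
    using bU ks_add_left[of b m] by (auto simp: mon_def)
  have eq: "(bin a b :: ('e, 'k) mpoly) ^ Suc n - mon (a + m)
      = bin a b * (bin a b ^ n - mon m) - mon (b + m)"
    by (simp add: bin_def algebra_simps mon_mult)
  have "bin a b * (bin a b ^ n - mon m) - mon (b + m) \<in> ?S"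
    using ci_diff[OF cS ci_mult[OF cS m(2)] mb] .
  moreover have "ks (a + m) \<subseteq> U" using keys_add[of a m] aU m(1) by blast
  ultimately show ?case using eq by (intro exI[of _ "a + m"]) simp
qed

context bip
begin

lemma dg_supp:
  assumes m: "\<forall>v. dg ends a v \<le> 1" and k: "ks t \<subseteq> ks a"
  shows "dg ends (ind (ks t)) v = (if dg ends t v = 0 then 0 else 1)"
proof -
  have le: "le_pm (ind (ks t)) a" by (rule ind_le[OF k])
  have "dg ends (ind (ks t)) v \<le> 1"
    using dg_mono[OF le, where v=v and ends=ends] m[rule_format, of v] by simp
  moreover have "dg ends (ind (ks t)) v = 0 \<longleftrightarrow> dg ends t v = 0" by (simp add: dg_eq0 ks_ind)
  ultimately show ?thesis by auto
qed

lemma K: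
  assumes mc: "mincyc ends a b"
  shows "ks t \<subseteq> ks a \<Longrightarrow> ks t' \<subseteq> ks b \<Longrightarrow> dg ends t = dg ends t' \<Longrightarrow>
     \<exists>k::nat. (t \<noteq> 0 \<longrightarrow> k > 0) \<and> (\<forall>i. A_deg A t i - A_deg A t' i = int k * (A_deg A a i - A_deg A b i))"
proof (induction "sz t" arbitrary: t t' rule: less_induct)
  case less
  have d: "dg ends a = dg ends b" and m: "\<forall>v. dg ends a v \<le> 1" and a0: "a \<noteq> 0"
    and minl: "\<And>p q. le_pm p a \<Longrightarrow> le_pm q b \<Longrightarrow> dg ends p = dg ends q \<Longrightarrow> p \<noteq> 0 \<Longrightarrow> p = a"
    using mc unfolding mincyc_def by auto
  have mb: "\<forall>v. dg ends b v \<le> 1" using m d by simp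
  show ?case
  proof (cases "t = 0")
    case True
    then have "t' = 0" using less.prems(3) dg0_imp by (metis dg_zero)
    then show ?thesis using True by (intro exI[of _ 0]) simp
  next
    case False
    let ?s = "ind (ks t)" and ?s' = "ind (ks t')"
    have ls: "le_pm ?s a" by (rule ind_le[OF less.prems(1)])
    have ls': "le_pm ?s' b" by (rule ind_le[OF less.prems(2)])
    have ds: "dg ends ?s = dg ends ?s'"
      by (rule ext) (simp add: dg_supp[OF m less.prems(1)] dg_supp[OF mb less.prems(2)] less.prems(3))
    have s0: "?s \<noteq> 0"
    proof -
      obtain e where "e \<in> ks t" using False by (metis keys_eq_empty ex_in_conv)
      then have "lk ?s e = 1" by (simp add: lk_ind)
      then show ?thesis by auto
    qed
    have sa: "?s = a" using minl[OF ls ls' ds s0] .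
    have sb: "?s' = b" using le_dg_eq[OF ls'] ds sa d by simp
    have lat: "le_pm a t" unfolding le_pm_def
    proof
      fix e show "lk a e \<le> lk t e" using sa[symmetric] by (auto simp: lk_ind in_keys_iff)
    qed
    have lbt: "le_pm b t'" unfolding le_pm_def
    proof
      fix e show "lk b e \<le> lk t' e" using sb[symmetric] by (auto simp: lk_ind in_keys_iff)
    qed
    have "t - a \<noteq> t"
    proof
      assume h: "t - a = t"
      obtain e where e: "e \<in> ks a" using a0 by (metis keys_eq_empty ex_in_conv)
      have "lk (t - a) e = lk t e - lk a e" by (rule lk_diff)
      moreover have "lk a e \<le> lk t e" "lk a e > 0" using lat e by (auto simp: le_pm_def in_keys_iff)
      ultimately show False using h by simp
    qed
    then have szl: "sz (t - a) < sz t" by (intro le_pm_sz_less) (simp add: le_pm_def lk_diff)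
    have k1: "ks (t - a) \<subseteq> ks a"
      using less.prems(1) by (auto simp: in_keys_iff lk_diff)
    have k2: "ks (t' - b) \<subseteq> ks b"
      using less.prems(2) by (auto simp: in_keys_iff lk_diff)
    have d2: "dg ends (t - a) = dg ends (t' - b)"
      by (rule ext) (simp add: dg_diff[OF lat] dg_diff[OF lbt] less.prems(3) d)
    obtain k1 where kk: "\<forall>i. A_deg A (t - a) i - A_deg A (t' - b) i = int k1 * (A_deg A a i - A_deg A b i)"
      using less.hyps[OF szl k1 k2 d2] by blast
    have "\<forall>i. A_deg A t i - A_deg A t' i = int (Suc k1) * (A_deg A a i - A_deg A b i)"
    proof
      fix i
      have "A_deg A t i = A_deg A (t - a) i + A_deg A a i" using A_deg_diff[OF lat, of A i] by simp
      moreover have "A_deg A t' i = A_deg A (t' - b) i + A_deg A b i" using A_deg_diff[OF lbt, of A i] by simp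
      ultimately show "A_deg A t i - A_deg A t' i = int (Suc k1) * (A_deg A a i - A_deg A b i)"
        using kk[rule_format, of i] by (simp add: algebra_simps)
    qed
    then show ?thesis by (intro exI[of _ "Suc k1"]) simp
  qed
qed

lemma LS:
  assumes mc: "mincyc ends a b" and cl: "\<forall>e. (\<forall>v\<in>ends e. dg ends a v \<noteq> 0) \<longrightarrow> e \<in> ks a \<or> e \<in> ks b"
  shows "ks t \<subseteq> ks a \<Longrightarrow> dg ends t = dg ends t' \<Longrightarrow> A_deg A t = A_deg A t' \<Longrightarrow> t \<noteq> t' \<Longrightarrow> A_deg A a = A_deg A b"
proof (induction "sz t" arbitrary: t t' rule: less_induct)
  case less
  have m: "\<forall>v. dg ends a v \<le> 1" using mc unfolding mincyc_def by auto
  show ?case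
  proof (cases "\<exists>e. e \<in> ks t \<and> e \<in> ks t'")
    case True
    then obtain e where e: "e \<in> ks t" "e \<in> ks t'" by blast
    let ?s = "Poly_Mapping.single e (1::nat)"
    have l1: "le_pm ?s t" and l2: "le_pm ?s t'" using e
      by (auto simp: le_pm_def lk_single in_keys_iff Suc_le_eq)
    have "t - ?s \<noteq> t"
    proof
      assume "t - ?s = t"
      then have "lk (t - ?s) e = lk t e" by simp
      then show False using e(1) by (simp add: lk_diff lk_single in_keys_iff)
    qed
    then have szl: "sz (t - ?s) < sz t" by (intro le_pm_sz_less) (simp add: le_pm_def lk_diff)
    have k1: "ks (t - ?s) \<subseteq> ks a"
      using less.prems(1) by (auto simp: in_keys_iff lk_diff)
    have d1: "dg ends (t - ?s) = dg ends (t' - ?s)"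
    proof
      fix v show "dg ends (t - ?s) v = dg ends (t' - ?s) v"
        using dg_diff[OF l1, where v=v and ends=ends] dg_diff[OF l2, where v=v and ends=ends]
          fun_cong[OF less.prems(2), where x=v] by simp
    qed
    have a1: "A_deg A (t - ?s) = A_deg A (t' - ?s)"
    proof
      fix i show "A_deg A (t - ?s) i = A_deg A (t' - ?s) i"
        using A_deg_diff[OF l1, where A=A and i=i] A_deg_diff[OF l2, where A=A and i=i]
          fun_cong[OF less.prems(3), where x=i] by simp
    qed
    have n1: "t - ?s \<noteq> t' - ?s"
    proof
      assume "t - ?s = t' - ?s"
      then have "t - ?s + ?s = t' - ?s + ?s" by simp
      then show False using diff_add[OF l1] diff_add[OF l2] less.prems(4) by simp
    qed
    show ?thesis using less.hyps[OF szl k1 d1 a1 n1] .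
  next
    case False
    have t0: "t \<noteq> 0"
    proof
      assume "t = 0"
      then have "t' = 0" using less.prems(2) dg0_imp by (metis dg_zero)
      then show False using \<open>t = 0\<close> less.prems(4) by simp
    qed
    have kt': "ks t' \<subseteq> ks b"
    proof
      fix e assume e: "e \<in> ks t'"
      have cov: "\<exists>e''\<in>ks t. v \<in> ends e''" if v: "v \<in> ends e" for v
      proof -
        have "lk t' e \<le> dg ends t' v" using v by (rule dg_ge)
        then have "dg ends t v \<noteq> 0" using e less.prems(2) by (auto simp: in_keys_iff)
        then show ?thesis by (auto simp: dg_eq0)
      qed
      have "\<forall>v\<in>ends e. dg ends a v \<noteq> 0"
      proof
        fix v assume "v \<in> ends e"
        then obtain e'' where e'': "e'' \<in> ks t" "v \<in> ends e''" using cov by blast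
        then have "e'' \<in> ks a" using less.prems(1) by blast
        moreover have "lk a e'' \<le> dg ends a v" using e'' by (intro dg_ge) auto
        ultimately show "dg ends a v \<noteq> 0" by (auto simp: in_keys_iff)
      qed
      then have "e \<in> ks a \<or> e \<in> ks b" using cl by blast
      moreover have "e \<notin> ks a"
      proof
        assume ea: "e \<in> ks a"
        obtain v where v: "v \<in> ends e" using ends_ne by blast
        then obtain e'' where e'': "e'' \<in> ks t" "v \<in> ends e''" using cov by blast
        have "e'' \<noteq> e" using e'' e False by blast
        then have "lk a e + lk a e'' \<le> dg ends a v" using two_edges[of e e'' v a] v e'' by auto
        moreover have "e'' \<in> ks a" using e'' less.prems(1) by blast
        then have "lk a e > 0" "lk a e'' > 0" using ea by (auto simp: in_keys_iff)
        ultimately show False using m[rule_format, of v] by simp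
      qed
      ultimately show "e \<in> ks b" by blast
    qed
    obtain k where k: "k > 0" "\<forall>i. A_deg A t i - A_deg A t' i = int k * (A_deg A a i - A_deg A b i)"
      using K[OF mc less.prems(1) kt' less.prems(2), of A] t0 by blast
    show ?thesis
    proof
      fix i
      have "int k * (A_deg A a i - A_deg A b i) = 0" using k(2)[rule_format, of i] less.prems(3) by simp
      then show "A_deg A a i = A_deg A b i" using k(1) by simp
    qed
  qed
qed

lemma psi_main:
  fixes As :: "nat \<Rightarrow> ('e \<Rightarrow> nat \<Rightarrow> int)" and s :: nat
  assumes mc: "mincyc ends a b" and cl: "\<forall>e. (\<forall>v\<in>ends e. dg ends a v \<noteq> 0) \<longrightarrow> e \<in> ks a \<or> e \<in> ks b"
    and JI: "\<And>i. i < s \<Longrightarrow> toric_ideal (As i) \<subseteq> (toric_ideal (graph_config ends) :: ('e, 'k::field) mpoly set)"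
    and IJ: "toric_ideal (graph_config ends) \<subseteq> rad (toric_sum s As :: ('e, 'k) mpoly set)"
  shows "(bin a b :: ('e, 'k) mpoly) \<in> toric_sum s As"
proof (rule ccontr)
  let ?J = "toric_sum s As :: ('e, 'k) mpoly set"
  assume nb: "(bin a b :: ('e, 'k) mpoly) \<notin> ?J"
  have d: "dg ends a = dg ends b" and a0: "a \<noteq> 0" and disj: "ks a \<inter> ks b = {}"
    using mc unfolding mincyc_def by auto
  have neq: "A_deg (As i) a \<noteq> A_deg (As i) b" if i: "i < s" for i
  proof
    assume "A_deg (As i) a = A_deg (As i) b"
    then have "(bin a b :: ('e, 'k) mpoly) \<in> toric_ideal (As i)" by (simp add: bin_toric)
    then have "(bin a b :: ('e, 'k) mpoly) \<in> ?J" unfolding toric_sum_def using i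
      by (intro ideal_gen_base) blast
    then show False using nb by simp
  qed
  define U where "U = ks a"
  define SU where "SU = {h :: ('e, 'k) mpoly. \<forall>t\<in>ks h. \<not> ks t \<subseteq> U}"
  have cSU: "closed_ideal SU" unfolding SU_def by (rule SU_closed)
  have JiS: "toric_ideal (As i) \<subseteq> SU" if i: "i < s" for i
  proof
    fix h :: "('e, 'k) mpoly" assume h: "h \<in> toric_ideal (As i)"
    show "h \<in> SU" unfolding SU_def
    proof (intro CollectI ballI notI)
      fix t assume t: "t \<in> ks h" and tU: "ks t \<subseteq> U"
      let ?F = "{u \<in> ks h. A_deg (As i) u = A_deg (As i) t}"
      have "(\<Sum>u\<in>?F. lk h u) = 0" using h unfolding toric_ideal_def by blast
      moreover have "t \<in> ?F" using t by simp
      moreover have "lk h t \<noteq> 0" using t by (simp add: in_keys_iff)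
      ultimately obtain t' where t': "t' \<in> ?F" "t' \<noteq> t" using fiber_other[of ?F "lk h" t] by auto
      then have "(bin t t' :: ('e, 'k) mpoly) \<in> toric_ideal (As i)" by (simp add: bin_toric)
      then have "(bin t t' :: ('e, 'k) mpoly) \<in> toric_ideal (graph_config ends)" using JI[OF i] by blast
      then have "dg ends t = dg ends t'" by (simp add: bin_toric A_G_eq)
      moreover have "A_deg (As i) t = A_deg (As i) t'" using t' by simp
      ultimately have "A_deg (As i) a = A_deg (As i) b"
        using LS[OF mc cl] tU t'(2) unfolding U_def by metis
      then show False using neq[OF i] by simp
    qed
  qed
  have JS: "?J \<subseteq> SU" unfolding toric_sum_def
    by (rule ideal_gen_least[OF cSU]) (use JiS in auto)
  have "(bin a b :: ('e, 'k) mpoly) \<in> toric_ideal (graph_config ends)" using d by (simp add: bin_toric A_G_eq)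
  then obtain n where n: "(bin a b :: ('e, 'k) mpoly) ^ n \<in> ?J" using IJ unfolding rad_def by auto
  have bU: "\<not> ks b \<subseteq> U"
  proof
    assume "ks b \<subseteq> U"
    then have "ks b = {}" using disj unfolding U_def by blast
    then have "b = 0" by simp
    then have "a = 0" using d dg0_imp by (metis dg_zero)
    then show False using a0 by simp
  qed
  obtain m where m: "ks m \<subseteq> U" "(bin a b :: ('e, 'k) mpoly) ^ n - mon m \<in> SU"
    using pow_bin[of a U b n] bU unfolding U_def SU_def by auto
  have "(bin a b :: ('e, 'k) mpoly) ^ n \<in> SU" using n JS by blast
  then have "bin a b ^ n - (bin a b ^ n - mon m) \<in> SU" using ci_diff[OF cSU _ m(2)] by blast
  then have "(mon m :: ('e, 'k) mpoly) \<in> SU" by simp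
  then show False using m(1) unfolding SU_def by (simp add: mon_def)
qed

end


definition Dv :: "('e::finite \<Rightarrow> 'v::finite set) \<Rightarrow> ('e \<Rightarrow>\<^sub>0 nat) \<Rightarrow> (nat \<Rightarrow>\<^sub>0 nat)" where
  "Dv ends u = (\<Sum>e\<in>UNIV. \<Sum>v\<in>ends e. Poly_Mapping.single (to_nat v) (lk u e))"

lemma lk_Dv: "lk (Dv ends u) i = (\<Sum>e\<in>UNIV. \<Sum>v\<in>ends e. if to_nat v = i then lk u e else 0)"
  unfolding Dv_def by (simp add: lookup_sum lk_single eq_commute)

lemma lk_Dv_to_nat: "lk (Dv ends u) (to_nat w) = dg ends u w"
proof -
  have "(\<Sum>v\<in>ends e. if to_nat v = to_nat w then lk u e else 0) = (if w \<in> ends e then lk u e else 0)" for e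
  proof -
    have "(\<Sum>v\<in>ends e. if to_nat v = to_nat w then lk u e else 0) = (\<Sum>v\<in>ends e. if v = w then lk u e else 0)"
      by (intro sum.cong) (auto simp: inj_eq[OF inj_to_nat])
    then show ?thesis by (simp add: sum.delta')
  qed
  then show ?thesis unfolding lk_Dv dg_def by simp
qed

lemma lk_Dv_other: "i \<notin> range (to_nat :: 'v \<Rightarrow> nat) \<Longrightarrow> lk (Dv (ends :: 'e::finite \<Rightarrow> 'v::finite set) u) i = 0"
  unfolding lk_Dv by (auto intro!: sum.neutral)

lemma Dv_eq: "Dv (ends :: 'e::finite \<Rightarrow> 'v::finite set) u = Dv ends u' \<longleftrightarrow> dg ends u = dg ends u'"
proof
  assume "Dv ends u = Dv ends u'"
  then show "dg ends u = dg ends u'" by (metis lk_Dv_to_nat ext)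
next
  assume d: "dg ends u = dg ends u'"
  show "Dv ends u = Dv ends u'"
  proof (rule poly_mapping_eqI)
    fix i
    show "lk (Dv ends u) i = lk (Dv ends u') i"
    proof (cases "i \<in> range (to_nat :: 'v \<Rightarrow> nat)")
      case True
      then obtain w :: 'v where "i = to_nat w" by blast
      then show ?thesis by (simp add: lk_Dv_to_nat d)
    qed (simp add: lk_Dv_other)
  qed
qed

lemma Dv_add: "Dv ends (u + u') = Dv ends u + Dv ends u'"
  unfolding Dv_def by (simp add: lookup_add single_add sum.distrib)

lemma Dv_zero: "Dv ends 0 = 0"
  unfolding Dv_def by simp

definition phi :: "('e::finite \<Rightarrow> 'v::finite set) \<Rightarrow> ('e, 'k::field) mpoly \<Rightarrow> (nat \<Rightarrow>\<^sub>0 nat) \<Rightarrow>\<^sub>0 'k" where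
  "phi ends f = (\<Sum>u\<in>ks f. Poly_Mapping.single (Dv ends u) (lk f u))"

lemma phi_sup: "finite S \<Longrightarrow> ks f \<subseteq> S \<Longrightarrow> phi ends f = (\<Sum>u\<in>S. Poly_Mapping.single (Dv ends u) (lk f u))"
  unfolding phi_def by (rule sum.mono_neutral_left) (auto simp: in_keys_iff)

lemma phi_add: "phi ends (f + g) = phi ends f + phi ends g"
proof -
  let ?S = "ks f \<union> ks g"
  have "phi ends (f + g) = (\<Sum>u\<in>?S. Poly_Mapping.single (Dv ends u) (lk (f + g) u))"
    by (rule phi_sup) (auto simp: keys_add)
  also have "\<dots> = (\<Sum>u\<in>?S. Poly_Mapping.single (Dv ends u) (lk f u)) + (\<Sum>u\<in>?S. Poly_Mapping.single (Dv ends u) (lk g u))"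
    by (simp add: lookup_add single_add sum.distrib)
  also have "\<dots> = phi ends f + phi ends g"
    by (simp add: phi_sup[of ?S f] phi_sup[of ?S g])
  finally show ?thesis .
qed

lemma phi_zero: "phi ends 0 = 0"
  unfolding phi_def by simp

lemma phi_single: "phi ends (Poly_Mapping.single u c) = Poly_Mapping.single (Dv ends u) c"
  by (cases "c = 0") (simp_all add: phi_def)

lemma phi_sum: "finite F \<Longrightarrow> phi ends (\<Sum>x\<in>F. h x) = (\<Sum>x\<in>F. phi ends (h x))"
  by (induction F rule: finite_induct) (simp_all add: phi_zero phi_add)

lemma pm_expand: "(\<Sum>u\<in>ks f. Poly_Mapping.single u (lk f u)) = f"
proof (rule poly_mapping_eqI)
  fix k
  show "lk (\<Sum>u\<in>ks f. Poly_Mapping.single u (lk f u)) k = lk f k"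
    by (simp add: lookup_sum lk_single in_keys_iff)
qed

lemma phi_mult: "phi ends (f * g) = phi ends f * phi ends g"
proof -
  have "f * g = (\<Sum>u\<in>ks f. Poly_Mapping.single u (lk f u)) * (\<Sum>u'\<in>ks g. Poly_Mapping.single u' (lk g u'))"
    by (simp only: pm_expand)
  also have "\<dots> = (\<Sum>u\<in>ks f. \<Sum>u'\<in>ks g. Poly_Mapping.single (u + u') (lk f u * lk g u'))"
    by (simp add: sum_product mult_single)
  finally have fg: "f * g = (\<Sum>u\<in>ks f. \<Sum>u'\<in>ks g. Poly_Mapping.single (u + u') (lk f u * lk g u'))" .
  have "phi ends (f * g) = (\<Sum>u\<in>ks f. \<Sum>u'\<in>ks g. Poly_Mapping.single (Dv ends u + Dv ends u') (lk f u * lk g u'))"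
    unfolding fg by (simp add: phi_sum phi_single Dv_add)
  also have "\<dots> = phi ends f * phi ends g"
    unfolding phi_def by (simp add: sum_product mult_single)
  finally show ?thesis .
qed

lemma phi_one: "phi ends 1 = 1"
proof -
  have "phi ends (Poly_Mapping.single 0 1) = Poly_Mapping.single (Dv ends 0) 1" by (rule phi_single)
  then show ?thesis by (simp add: Dv_zero)
qed

lemma phi_pow: "phi ends (f ^ n) = (phi ends f) ^ n"
  by (induction n) (simp_all add: phi_one phi_mult)

lemma lk_phi: "lk (phi ends f) W = (\<Sum>u\<in>{u \<in> ks f. Dv ends u = W}. lk f u)"
  unfolding phi_def by (simp add: lookup_sum lk_single sum.inter_filter eq_commute)

lemma toric_phi: "(f \<in> toric_ideal (graph_config ends)) \<longleftrightarrow> phi ends f = 0"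
proof
  assume fT: "f \<in> toric_ideal (graph_config ends)"
  show "phi ends f = 0"
  proof (rule poly_mapping_eqI)
    fix W
    show "lk (phi ends f) W = lk 0 W"
    proof (cases "\<exists>u0\<in>ks f. Dv ends u0 = W")
      case True
      then obtain u0 where u0: "u0 \<in> ks f" "Dv ends u0 = W" by blast
      have "{u \<in> ks f. Dv ends u = W} = {u \<in> ks f. A_deg (graph_config ends) u = A_deg (graph_config ends) u0}"
        using u0 by (auto simp: Dv_eq A_G_eq)
      then show ?thesis using fT unfolding toric_ideal_def lk_phi by simp
    next
      case False
      then have E: "{u \<in> ks f. Dv ends u = W} = {}" by auto
      show ?thesis unfolding lk_phi E by simp
    qed
  qed
next
  assume p0: "phi ends f = 0"
  show "f \<in> toric_ideal (graph_config ends)" unfolding toric_ideal_def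
  proof (intro CollectI allI)
    fix w
    show "(\<Sum>u\<in>{u \<in> ks f. A_deg (graph_config ends) u = w}. lk f u) = 0"
    proof (cases "\<exists>u0\<in>ks f. A_deg (graph_config ends) u0 = w")
      case True
      then obtain u0 where u0: "u0 \<in> ks f" "A_deg (graph_config ends) u0 = w" by blast
      have "{u \<in> ks f. A_deg (graph_config ends) u = w} = {u \<in> ks f. Dv ends u = Dv ends u0}"
        using u0 by (auto simp: Dv_eq A_G_eq)
      then show ?thesis using p0 lk_phi[of ends f "Dv ends u0"] by simp
    next
      case False
      then have E: "{u \<in> ks f. A_deg (graph_config ends) u = w} = {}" by auto
      show ?thesis unfolding E by simp
    qed
  qed
qed

lemma toric_rad:
  "rad (toric_ideal (graph_config ends) :: ('e::finite, 'k::field) mpoly set) = toric_ideal (graph_config (ends :: 'e \<Rightarrow> 'v::finite set))"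
proof
  show "rad (toric_ideal (graph_config ends) :: ('e, 'k) mpoly set) \<subseteq> toric_ideal (graph_config ends)"
  proof
    fix f :: "('e, 'k) mpoly" assume "f \<in> rad (toric_ideal (graph_config ends))"
    then obtain n where "f ^ n \<in> toric_ideal (graph_config ends)" unfolding rad_def by blast
    then have "(phi ends f) ^ n = 0" by (simp add: toric_phi phi_pow)
    then have "phi ends f = 0" by simp
    then show "f \<in> toric_ideal (graph_config ends)" by (simp add: toric_phi)
  qed
  show "toric_ideal (graph_config ends) \<subseteq> (rad (toric_ideal (graph_config ends)) :: ('e, 'k) mpoly set)"
    unfolding rad_def by (auto intro: exI[of _ 1])
qed

theorem theorem3p1:
  fixes ends :: "'e::finite \<Rightarrow> 'v::finite set"
  assumes "simple_graph ends" and "graph_connected ends" and "graph_bipartite ends"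
  defines "I \<equiv> (toric_ideal (graph_config ends) :: ('e, 'k::field) mpoly set)"
  shows "(\<exists>s. is_splitting I s) = (\<exists>s. is_rad_splitting I s)
         \<and> ((\<exists>s. is_splitting I s) \<longrightarrow> Split I = Split_rad I)"
proof -
  from assms(1) have c2: "\<And>e. card (ends e) = 2" and ij: "inj ends" unfolding simple_graph_def by auto
  from assms(3) obtain X where bX: "\<And>e. \<exists>x y. ends e = {x, y} \<and> x \<in> X \<and> y \<notin> X"
    unfolding graph_bipartite_def by blast
  interpret bip ends X using c2 ij bX by unfold_locales auto
  have radI: "rad I = I" unfolding I_def by (rule toric_rad)
  have key: "is_splitting I s \<longleftrightarrow> is_rad_splitting I s" for s
  proof
    assume "is_splitting I s"
    then obtain As where s1: "1 \<le> s" and As: "\<forall>i<s. configuration (As i) \<and> toric_ideal (As i) \<noteq> I"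
      and eq: "I = toric_sum s As"
      unfolding is_splitting_def by blast
    have "I = rad (toric_sum s As)" using eq radI by simp
    then show "is_rad_splitting I s" unfolding is_rad_splitting_def using s1 As by blast
  next
    assume "is_rad_splitting I s"
    then obtain As where s1: "1 \<le> s" and As: "\<forall>i<s. configuration (As i) \<and> toric_ideal (As i) \<noteq> I"
      and eq: "I = rad (toric_sum s As)"
      unfolding is_rad_splitting_def by blast
    let ?J = "toric_sum s As :: ('e, 'k) mpoly set"
    have JI: "?J \<subseteq> I"
    proof
      fix f assume "f \<in> ?J"
      then have "f ^ 1 \<in> ?J" by simp
      then show "f \<in> I" unfolding eq rad_def by blast
    qed
    have JiI: "toric_ideal (As i) \<subseteq> (toric_ideal (graph_config ends) :: ('e, 'k) mpoly set)" if "i < s" for i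
    proof -
      have "toric_ideal (As i) \<subseteq> ?J" unfolding toric_sum_def using that
        by (auto intro: ideal_gen_base)
      then show ?thesis using JI unfolding I_def by blast
    qed
    have IJr: "toric_ideal (graph_config ends) \<subseteq> rad ?J" using eq unfolding I_def by simp
    have cJ: "closed_ideal ?J" unfolding toric_sum_def by (rule ideal_gen_closed)
    have bins: "(bin a b :: ('e, 'k) mpoly) \<in> ?J" if "dg ends a = dg ends b" for a b
      using gen[OF cJ, of a b] psi_main[OF _ _ JiI IJr] that by blast
    have "I \<subseteq> ?J" unfolding I_def
      by (rule toric_gen[OF cJ]) (simp add: A_G_eq bins)
    then have "I = ?J" using JI by blast
    then show "is_splitting I s" using s1 As unfolding is_splitting_def by blast
  qed
  have ex: "(\<exists>s. is_splitting I s) = (\<exists>s. is_rad_splitting I s)" using key by blast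
  have "is_splitting I = is_rad_splitting I" using key by (intro ext) blast
  then have "Split I = Split_rad I" unfolding Defs.Split_def Defs.Split_rad_def by simp
  then show ?thesis using ex by blast
qed

end
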